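(* Let $f$ be a strictly convex norm on $\mathbb{R}^n$. Then for every $\varepsilon>0$ there exists $\delta>0$ such that for every $\theta\in\partial B_f^1(0)$ and every $\xi\in B_f^1(0)\setminus B_f^1(\theta)$ satisfying $$\Xi(\xi)\in\partial B_f^1(0)\cap\left(B_f^{1+\delta}(\theta)\setminus B_f^1(\theta)\right)$$ we have $f(\xi)>1-\varepsilon$.
   Context: A norm $f$ here is a continuous function $\mathbb{R}^n\to\mathbb{R}_+$ with $f(x)=0\iff x=0$, $f(-x)=f(x)$, $f(tx)=tf(x)$ for $t\ge0$, and convex unit ball with $0$ in its interior; $f$ is strictly convex if its unit ball is strictly convex (its boundary contains no line segments). $B_f^\lambda(a)=\{y\in\mathbb{R}^n: f(y-a)\le\lambda\}$, and $\partial$ denotes the boundary. For $\xi\ne0$, $\Xi(\xi)=\xi/f(\xi)$. *)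

theory Defs
  imports "HOL-Analysis.Analysis"
begin

definition Bf :: "('a::real_vector \<Rightarrow> real) \<Rightarrow> real \<Rightarrow> 'a \<Rightarrow> 'a set" where
  "Bf f lam a = {y. f (y - a) \<le> lam}"

definition is_norm_fn :: "('a::euclidean_space \<Rightarrow> real) \<Rightarrow> bool" where
  "is_norm_fn f \<longleftrightarrow> continuous_on UNIV f
     \<and> (\<forall>x. f x \<ge> 0)
     \<and> (\<forall>x. f x = 0 \<longleftrightarrow> x = 0)
     \<and> (\<forall>x. f (- x) = f x)
     \<and> (\<forall>x t. t \<ge> 0 \<longrightarrow> f (t *\<^sub>R x) = t * f x)
     \<and> convex (Bf f 1 0)
     \<and> 0 \<in> interior (Bf f 1 0)"

definition strictly_convex_norm :: "('a::euclidean_space \<Rightarrow> real) \<Rightarrow> bool" where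
  "strictly_convex_norm f \<longleftrightarrow> is_norm_fn f
     \<and> (\<forall>x y. x \<noteq> y \<longrightarrow> \<not> closed_segment x y \<subseteq> frontier (Bf f 1 0))"

definition Xi :: "('a::real_vector \<Rightarrow> real) \<Rightarrow> 'a \<Rightarrow> 'a" where
  "Xi f \<xi> = (1 / f \<xi>) *\<^sub>R \<xi>"

end

theory Submission
  imports Defs
begin


lemma nf_basic:
  assumes "is_norm_fn (f::'a::euclidean_space \<Rightarrow> real)"
  shows "continuous_on UNIV f" "\<And>x. f x \<ge> 0" "\<And>x. f x = 0 \<longleftrightarrow> x = 0"
    "\<And>x. f (- x) = f x" "\<And>x t. t \<ge> 0 \<Longrightarrow> f (t *\<^sub>R x) = t * f x"
    "convex {y. f y \<le> 1}" "0 \<in> interior {y. f y \<le> 1}"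
  using assms unfolding is_norm_fn_def Bf_def by auto

lemma nf_scale:
  assumes "is_norm_fn (f::'a::euclidean_space \<Rightarrow> real)"
  shows "f (t *\<^sub>R x) = \<bar>t\<bar> * f x"
proof (cases "t \<ge> 0")
  case True thus ?thesis using nf_basic(5)[OF assms] by simp
next
  case False
  have 1: "f (- (t *\<^sub>R x)) = f (t *\<^sub>R x)" using nf_basic(4)[OF assms] .
  have 2: "f ((-t) *\<^sub>R x) = (-t) * f x" using False nf_basic(5)[OF assms, of "-t" x] by simp
  show ?thesis using 1 2 False by simp
qed

lemma nf_tri:
  assumes "is_norm_fn (f::'a::euclidean_space \<Rightarrow> real)"
  shows "f (x + y) \<le> f x + f y"
proof (cases "x = 0 \<or> y = 0")
  case True thus ?thesis using nf_basic[OF assms] by auto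
next
  case False
  define a where "a = f x"
  define b where "b = f y"
  have "a \<noteq> 0" "b \<noteq> 0" using False nf_basic(3)[OF assms] a_def b_def by auto
  hence a: "a > 0" and b: "b > 0" using nf_basic(2)[OF assms, of x] nf_basic(2)[OF assms, of y] a_def b_def
    by auto
  have 1: "(1/a) *\<^sub>R x \<in> {y. f y \<le> 1}" using a nf_basic(5)[OF assms, of "1/a" x] a_def by simp
  have 2: "(1/b) *\<^sub>R y \<in> {y. f y \<le> 1}" using b nf_basic(5)[OF assms, of "1/b" y] b_def by simp
  have s: "a/(a+b) + b/(a+b) = 1" using a b by (simp add: add_divide_distrib[symmetric])
  have "(a/(a+b)) *\<^sub>R ((1/a) *\<^sub>R x) + (b/(a+b)) *\<^sub>R ((1/b) *\<^sub>R y) \<in> {y. f y \<le> 1}"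
    by (rule convexD[OF nf_basic(6)[OF assms] 1 2 _ _ s]) (use a b in simp)+
  moreover have "(a/(a+b)) *\<^sub>R ((1/a) *\<^sub>R x) + (b/(a+b)) *\<^sub>R ((1/b) *\<^sub>R y) = (1/(a+b)) *\<^sub>R (x+y)"
    using a b by (simp add: scaleR_add_right)
  ultimately have "f ((1/(a+b)) *\<^sub>R (x+y)) \<le> 1" by simp
  hence "(1/(a+b)) * f (x+y) \<le> 1" using nf_basic(5)[OF assms, of "1/(a+b)"] a b by simp
  thus ?thesis using a b a_def b_def by (simp add: divide_simps)
qed

lemma nf_cvx:
  assumes "is_norm_fn (f::'a::euclidean_space \<Rightarrow> real)" "0 \<le> u" "u \<le> 1"
  shows "f ((1-u) *\<^sub>R x + u *\<^sub>R y) \<le> (1-u) * f x + u * f y"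
  using nf_tri[OF assms(1), of "(1-u) *\<^sub>R x" "u *\<^sub>R y"] nf_basic(5)[OF assms(1)] assms by simp

lemma nf_gcvx:
  assumes "is_norm_fn (f::'a::euclidean_space \<Rightarrow> real)" "0 \<le> u" "u \<le> 1"
  shows "f (((1-u)*a+u*b) *\<^sub>R \<eta> - \<theta>) \<le> (1-u) * f (a *\<^sub>R \<eta> - \<theta>) + u * f (b *\<^sub>R \<eta> - \<theta>)"
proof -
  have "((1-u)*a+u*b) *\<^sub>R \<eta> - \<theta> = (1-u) *\<^sub>R (a *\<^sub>R \<eta> - \<theta>) + u *\<^sub>R (b *\<^sub>R \<eta> - \<theta>)"
    by (simp add: algebra_simps)
  thus ?thesis using nf_cvx[OF assms] by simp
qed



lemma nf_frontier:
  assumes "is_norm_fn (f::'a::euclidean_space \<Rightarrow> real)"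
  shows "frontier (Bf f 1 0) = {x. f x = 1}"
proof -
  have B: "Bf f 1 0 = {x. f x \<le> 1}" unfolding Bf_def by simp
  have cl: "closed {x. f x \<le> 1}"
    using closed_Collect_le[OF nf_basic(1)[OF assms] continuous_on_const] by simp
  have op: "open {x. f x < 1}"
    using open_Collect_less[OF nf_basic(1)[OF assms] continuous_on_const] by simp
  have i1: "{x. f x < 1} \<subseteq> interior {x. f x \<le> 1}"
    using op by (intro interior_maximal) auto
  have i2: "interior {x. f x \<le> 1} \<subseteq> {x. f x < 1}"
  proof
    fix x assume x: "x \<in> interior {x. f x \<le> 1}"
    then obtain e where e: "e > 0" "ball x e \<subseteq> {x. f x \<le> 1}"
      unfolding mem_interior by blast
    have "f x \<le> 1" using x interior_subset by blast
    show "x \<in> {x. f x < 1}"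
    proof (rule ccontr)
      assume "x \<notin> {x. f x < 1}"
      hence fx: "f x = 1" using \<open>f x \<le> 1\<close> by simp
      have xn: "x \<noteq> 0" using fx nf_basic(3)[OF assms, of x] by simp
      hence nx: "norm x > 0" by simp
      define y where "y = (1 + e / (2 * norm x)) *\<^sub>R x"
      have "x - y = - ((e / (2 * norm x)) *\<^sub>R x)" unfolding y_def by (simp add: algebra_simps)
      hence "dist x y = \<bar>e / (2 * norm x)\<bar> * norm x" unfolding dist_norm by simp
      also have "\<dots> = e/2" using nx e by simp
      finally have "dist x y = e/2" .
      hence "y \<in> ball x e" using e by simp
      hence "f y \<le> 1" using e(2) by auto
      moreover have "f y = 1 + e / (2 * norm x)" unfolding y_def
        using nf_basic(5)[OF assms, of "1 + e / (2 * norm x)" x] fx e nx by simp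
      moreover have "e / (2 * norm x) > 0" using e nx by simp
      ultimately show False by linarith
    qed
  qed
  have "interior {x. f x \<le> 1} = {x. f x < 1}" using i1 i2 by (rule antisym[rotated])
  then show ?thesis unfolding B frontier_def closure_closed[OF cl] by auto
qed



lemma nf_lower:
  assumes "is_norm_fn (f::'a::euclidean_space \<Rightarrow> real)"
  shows "\<exists>m>0. \<forall>x. m * norm x \<le> f x"
proof -
  obtain b :: 'a where b: "b \<in> Basis" using nonempty_Basis by blast
  hence "b \<in> sphere 0 1" by simp
  hence ne: "sphere (0::'a) 1 \<noteq> {}" by blast
  obtain x0 where x0: "x0 \<in> sphere 0 1" "\<forall>y\<in>sphere 0 1. f x0 \<le> f y"
    using continuous_attains_inf[OF compact_sphere ne continuous_on_subset[OF nf_basic(1)[OF assms]]]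
    by blast
  have "x0 \<noteq> 0" using x0(1) by auto
  hence m: "f x0 > 0" using nf_basic(2,3)[OF assms, of x0] by linarith
  have "f x0 * norm x \<le> f x" for x
  proof (cases "x = 0")
    case True thus ?thesis using nf_basic(2)[OF assms, of 0] by simp
  next
    case False
    hence "(1 / norm x) *\<^sub>R x \<in> sphere 0 1" by simp
    hence "f x0 \<le> f ((1 / norm x) *\<^sub>R x)" using x0(2) by blast
    also have "\<dots> = f x / norm x" using nf_basic(5)[OF assms, of "1/norm x" x] by simp
    finally show ?thesis using False by (simp add: field_simps)
  qed
  thus ?thesis using m by blast
qed

lemma nf_sphere_compact:
  assumes "is_norm_fn (f::'a::euclidean_space \<Rightarrow> real)"
  shows "compact {x. f x = 1}"
proof -
  obtain m where m: "m > 0" "\<forall>x. m * norm x \<le> f x" using nf_lower[OF assms] by blast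
  have "{x. f x = 1} \<subseteq> cball 0 (1/m)"
  proof
    fix x assume "x \<in> {x. f x = 1}"
    hence "m * norm x \<le> 1" using m(2)[rule_format, of x] by simp
    thus "x \<in> cball 0 (1/m)" using m(1) by (simp add: field_simps)
  qed
  hence bd: "bounded {x. f x = 1}" using bounded_subset bounded_cball by blast
  have "{x. f x = 1} = {x. f x \<le> 1} \<inter> {x. 1 \<le> f x}" by auto
  moreover have "closed {x. f x \<le> 1}"
    using closed_Collect_le[OF nf_basic(1)[OF assms] continuous_on_const] by simp
  moreover have "closed {x. 1 \<le> f x}"
    using closed_Collect_le[OF continuous_on_const nf_basic(1)[OF assms]] by simp
  ultimately have "closed {x. f x = 1}" by auto
  thus ?thesis using bd compact_eq_bounded_closed by blast
qed

lemma key: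
  fixes f :: "'a::euclidean_space \<Rightarrow> real"
  assumes sc: "strictly_convex_norm f" and th: "f \<theta> = 1" and et: "f \<eta> = 1"
    and c: "0 < c" "c < 1" and gc1: "f (c *\<^sub>R \<eta> - \<theta>) \<ge> 1"
  shows "f (\<eta> - \<theta>) > 1"
proof (rule ccontr)
  assume "\<not> f (\<eta> - \<theta>) > 1"
  hence g1le: "f (1 *\<^sub>R \<eta> - \<theta>) \<le> 1" by simp
  have nf: "is_norm_fn f" using sc unfolding strictly_convex_norm_def by simp
  define g where "g s = f (s *\<^sub>R \<eta> - \<theta>)" for s
  have g0: "g 0 = 1" unfolding g_def using nf_basic(4)[OF nf, of \<theta>] th by simp
  have gcv: "g ((1-u)*a + u*b) \<le> (1-u) * g a + u * g b" if "0 \<le> u" "u \<le> 1" for u a b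
    unfolding g_def using nf_gcvx[OF nf that] .
  have "g c \<le> (1-c) * g 0 + c * g 1" using gcv[of c 0 1] c by simp
  hence "1 \<le> (1-c) + c * g 1" using gc1 g0 unfolding g_def by simp
  hence "c * 1 \<le> c * g 1" by (simp add: algebra_simps)
  hence "1 \<le> g 1" using c by simp
  hence g1: "g 1 = 1" using g1le unfolding g_def by simp
  have gc: "g c = 1" using \<open>g c \<le> (1-c) * g 0 + c * g 1\<close> g1 g0 gc1 unfolding g_def by simp
  have gs: "g s = 1" if s: "0 \<le> s" "s \<le> 1" for s
  proof -
    have up: "g s \<le> 1" using gcv[of s 0 1] s g0 g1 by simp
    have lo: "g s \<ge> 1"
    proof (cases "s \<le> c")
      case True
      hence s1: "s < 1" using c by simp
      define u where "u = (c - s) / (1 - s)"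
      have u: "0 \<le> u" "u < 1" using True s1 c unfolding u_def by (auto simp: field_simps)
      have "u * (1-s) = c - s" using s1 unfolding u_def by simp
      hence "(1-u) * s + u*1 = c" by (simp add: algebra_simps)
      hence "g c \<le> (1-u) * g s + u * g 1" using gcv[of u s 1] u by simp
      hence "1 \<le> (1-u) * g s + u" using gc g1 by simp
      hence "(1-u) * 1 \<le> (1-u) * g s" by (simp add: algebra_simps)
      thus ?thesis using u by simp
    next
      case False
      define u where "u = c / s"
      have u: "0 < u" "u \<le> 1" using False c unfolding u_def by (auto simp: field_simps)
      have "(1-u)*0 + u * s = c" using False c unfolding u_def by (simp add: field_simps)
      hence "g c \<le> (1-u) * g 0 + u * g s" using gcv[of u 0 s] u by simp
      hence "1 \<le> (1-u) + u * g s" using gc g0 by simp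
      hence "u * 1 \<le> u * g s" by (simp add: algebra_simps)
      thus ?thesis using u by simp
    qed
    show ?thesis using up lo by simp
  qed
  have "closed_segment (-\<theta>) (\<eta> - \<theta>) \<subseteq> frontier (Bf f 1 0)"
  proof
    fix z assume "z \<in> closed_segment (-\<theta>) (\<eta> - \<theta>)"
    then obtain u where u: "0 \<le> u" "u \<le> 1" "z = (1-u) *\<^sub>R (-\<theta>) + u *\<^sub>R (\<eta> - \<theta>)"
      unfolding closed_segment_def by blast
    have "z = u *\<^sub>R \<eta> - \<theta>" using u(3) by (simp add: algebra_simps)
    hence "f z = 1" using gs[OF u(1,2)] unfolding g_def by simp
    thus "z \<in> frontier (Bf f 1 0)" using nf_frontier[OF nf] by simp
  qed
  moreover have "-\<theta> \<noteq> \<eta> - \<theta>" using et nf_basic(3)[OF nf, of \<eta>] by auto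
  ultimately show False using sc unfolding strictly_convex_norm_def by blast
qed


lemma unif:
  fixes f :: "'a::euclidean_space \<Rightarrow> real"
  assumes sc: "strictly_convex_norm f" and c: "0 < c" "c < 1"
  shows "\<exists>\<delta>>0. \<forall>\<theta> \<eta>. f \<theta> = 1 \<longrightarrow> f \<eta> = 1 \<longrightarrow> f (c *\<^sub>R \<eta> - \<theta>) \<ge> 1 \<longrightarrow> f (\<eta> - \<theta>) > 1 + \<delta>"
proof -
  have nf: "is_norm_fn f" using sc unfolding strictly_convex_norm_def by simp
  define S where "S = {x. f x = 1}"
  define K where "K = (S \<times> S) \<inter> {p. 1 \<le> f (c *\<^sub>R snd p - fst p)}"
  have cf: "continuous_on UNIV f" using nf_basic(1)[OF nf] .
  have c1: "continuous_on UNIV (\<lambda>p::'a\<times>'a. f (c *\<^sub>R snd p - fst p))"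
    by (rule continuous_on_compose2[OF cf]) (auto intro!: continuous_intros)
  have "closed {p::'a\<times>'a. 1 \<le> f (c *\<^sub>R snd p - fst p)}"
    using closed_Collect_le[OF continuous_on_const c1] by simp
  moreover have "compact (S \<times> S)" using nf_sphere_compact[OF nf] unfolding S_def
    by (intro compact_Times)
  ultimately have cK: "compact K" unfolding K_def by (rule compact_Int_closed[rotated])
  show ?thesis
  proof (cases "K = {}")
    case True
    show ?thesis
      by (rule exI[of _ 1]) (use True in \<open>auto simp: K_def S_def\<close>)
  next
    case False
    have "continuous_on K (\<lambda>p::'a\<times>'a. f (snd p - fst p))"
      by (rule continuous_on_compose2[OF cf]) (auto intro!: continuous_intros)
    then obtain p0 where p0: "p0 \<in> K" "\<forall>p\<in>K. f (snd p0 - fst p0) \<le> f (snd p - fst p)"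
      using continuous_attains_inf[OF cK False] by blast
    have m: "f (snd p0 - fst p0) > 1"
      using p0(1) key[OF sc _ _ c, of "fst p0" "snd p0"] unfolding K_def S_def by auto
    define \<delta> where "\<delta> = (f (snd p0 - fst p0) - 1) / 2"
    have "\<delta> > 0" using m unfolding \<delta>_def by simp
    moreover have "\<forall>\<theta> \<eta>. f \<theta> = 1 \<longrightarrow> f \<eta> = 1 \<longrightarrow> f (c *\<^sub>R \<eta> - \<theta>) \<ge> 1 \<longrightarrow> f (\<eta> - \<theta>) > 1 + \<delta>"
    proof (intro allI impI)
      fix \<theta> \<eta> assume "f \<theta> = 1" "f \<eta> = 1" "f (c *\<^sub>R \<eta> - \<theta>) \<ge> 1"
      hence "(\<theta>, \<eta>) \<in> K" unfolding K_def S_def by simp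
      hence "f (snd p0 - fst p0) \<le> f (\<eta> - \<theta>)" using p0(2) by force
      moreover have "1 + \<delta> < f (snd p0 - fst p0)" using m unfolding \<delta>_def by (simp add: field_simps)
      ultimately show "f (\<eta> - \<theta>) > 1 + \<delta>" by linarith
    qed
    ultimately show ?thesis by blast
  qed
qed

theorem lemma2p3:
  fixes f :: "real ^ 'n \<Rightarrow> real"
  assumes "strictly_convex_norm f"
  shows "\<forall>\<epsilon>>0. \<exists>\<delta>>0. \<forall>\<theta> \<xi>.
           \<theta> \<in> frontier (Bf f 1 0)
           \<longrightarrow> \<xi> \<in> Bf f 1 0 - Bf f 1 \<theta>
           \<longrightarrow> \<xi> \<noteq> 0
           \<longrightarrow> Xi f \<xi> \<in> frontier (Bf f 1 0) \<inter> (Bf f (1 + \<delta>) \<theta> - Bf f 1 \<theta>)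
           \<longrightarrow> f \<xi> > 1 - \<epsilon>"
proof (intro allI impI)
  fix \<epsilon> :: real assume ep: "\<epsilon> > 0"
  have nf: "is_norm_fn f" using assms unfolding strictly_convex_norm_def by simp
  show "\<exists>\<delta>>0. \<forall>\<theta> \<xi>.
           \<theta> \<in> frontier (Bf f 1 0)
           \<longrightarrow> \<xi> \<in> Bf f 1 0 - Bf f 1 \<theta>
           \<longrightarrow> \<xi> \<noteq> 0
           \<longrightarrow> Xi f \<xi> \<in> frontier (Bf f 1 0) \<inter> (Bf f (1 + \<delta>) \<theta> - Bf f 1 \<theta>)
           \<longrightarrow> f \<xi> > 1 - \<epsilon>"
  proof (cases "\<epsilon> \<ge> 1")
    case True
    have "f \<xi> > 1 - \<epsilon>" if "\<xi> \<noteq> 0" for \<xi>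
    proof -
      have "f \<xi> \<noteq> 0" using that nf_basic(3)[OF nf] by simp
      hence "f \<xi> > 0" using nf_basic(2)[OF nf, of \<xi>] by linarith
      thus ?thesis using True by linarith
    qed
    thus ?thesis by (intro exI[of _ 1]) auto
  next
    case False
    define c where "c = 1 - \<epsilon>"
    have c: "0 < c" "c < 1" using False ep unfolding c_def by auto
    obtain \<delta> where d: "\<delta> > 0"
      "\<forall>\<theta> \<eta>. f \<theta> = 1 \<longrightarrow> f \<eta> = 1 \<longrightarrow> f (c *\<^sub>R \<eta> - \<theta>) \<ge> 1 \<longrightarrow> f (\<eta> - \<theta>) > 1 + \<delta>"
      using unif[OF assms c] by blast
    show ?thesis
    proof (intro exI[of _ \<delta>] conjI allI impI d(1))
      fix \<theta> \<xi>
      assume th: "\<theta> \<in> frontier (Bf f 1 0)" and xi: "\<xi> \<in> Bf f 1 0 - Bf f 1 \<theta>"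
        and xn: "\<xi> \<noteq> 0"
        and X: "Xi f \<xi> \<in> frontier (Bf f 1 0) \<inter> (Bf f (1 + \<delta>) \<theta> - Bf f 1 \<theta>)"
      define \<eta> where "\<eta> = Xi f \<xi>"
      define t where "t = f \<xi>"
      have fth: "f \<theta> = 1" using th nf_frontier[OF nf] by simp
      have fet: "f \<eta> = 1" using X nf_frontier[OF nf] unfolding \<eta>_def by simp
      have eth: "f (\<eta> - \<theta>) \<le> 1 + \<delta>" using X unfolding \<eta>_def Bf_def by simp
      have xth: "f (\<xi> - \<theta>) > 1" using xi unfolding Bf_def by simp
      have "t \<noteq> 0" using xn nf_basic(3)[OF nf] unfolding t_def by simp
      hence tp: "t > 0" using nf_basic(2)[OF nf, of \<xi>] unfolding t_def by linarith
      have xie: "\<xi> = t *\<^sub>R \<eta>" unfolding \<eta>_def Xi_def t_def using tp t_def by simp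
      show "f \<xi> > 1 - \<epsilon>"
      proof (rule ccontr)
        assume "\<not> f \<xi> > 1 - \<epsilon>"
        hence tc: "t \<le> c" unfolding t_def c_def by simp
        have "f (c *\<^sub>R \<eta> - \<theta>) \<ge> 1"
        proof (rule ccontr)
          assume gc: "\<not> f (c *\<^sub>R \<eta> - \<theta>) \<ge> 1"
          define u where "u = t / c"
          have u: "0 \<le> u" "u \<le> 1" using tp tc c unfolding u_def by (auto simp: field_simps)
          have tt: "(1-u)*0 + u*c = t" using c unfolding u_def by simp
          have "f (((1-u)*0 + u*c) *\<^sub>R \<eta> - \<theta>) \<le> (1-u) * f (0 *\<^sub>R \<eta> - \<theta>) + u * f (c *\<^sub>R \<eta> - \<theta>)"
            using nf_gcvx[OF nf u] .
          hence "f (\<xi> - \<theta>) \<le> (1-u) * 1 + u * f (c *\<^sub>R \<eta> - \<theta>)"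
            using tt xie nf_basic(4)[OF nf, of \<theta>] fth by simp
          also have "\<dots> \<le> (1-u) * 1 + u * 1" using gc u by (intro add_left_mono mult_left_mono) auto
          finally show False using xth by simp
        qed
        hence "f (\<eta> - \<theta>) > 1 + \<delta>" using d(2) fth fet by blast
        thus False using eth by simp
      qed
    qed
  qed
qed

end
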